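(* Let $\Omega$ be any set of $q$ elements, where $q$ is a power of two and $q \ge 8$. Then there exists a nice pair of permutations for $\Omega$.
   Context: For a permutation $\sigma$ of a $q$-element set $\Omega$ and $0 \le i < q$, $\sigma(i)$ denotes the element in position $i$. Given two permutations $\sigma_1,\sigma_2$ of $\Omega$, form the $2\times q$ array whose first row is $\sigma_1(0),\ldots,\sigma_1(q-1)$ and whose second row is $\sigma_2(0),\ldots,\sigma_2(q-1)$. Each $a\in\Omega$ occurs once in each row. If $a=\sigma_1(i)$, its first-row neighbors are $l_1=\sigma_1(i-1 \bmod q)$, $r_1=\sigma_1(i+1 \bmod q)$ and the down-neighbor $d=\sigma_2(i)$. If $a=\sigma_2(j)$, its second-row neighbors are $l_2=\sigma_2(j-1\bmod q)$, $r_2=\sigma_2(j+1 \bmod q)$ and the up-neighbor $u=\sigma_1(j)$. The pair $(\sigma_1,\sigma_2)$ is called a nice pair if for every $a\in\Omega$ the six elements $l_1,r_1,d,l_2,r_2,u$ are pairwise distinct. *)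

theory Defs
  imports Main
begin

text \<open>A permutation of a finite set \<Omega> is represented as a list listing each element
  of \<Omega> exactly once; position i holds the element \<sigma>(i).\<close>

definition is_perm_of :: "'a list \<Rightarrow> 'a set \<Rightarrow> bool" where
  "is_perm_of s \<Omega> \<longleftrightarrow> distinct s \<and> set s = \<Omega>"

definition nice_pair :: "'a set \<Rightarrow> 'a list \<Rightarrow> 'a list \<Rightarrow> bool" where
  "nice_pair \<Omega> s1 s2 \<longleftrightarrow>
     is_perm_of s1 \<Omega> \<and> is_perm_of s2 \<Omega> \<and>
     (let q = card \<Omega> in
      \<forall>i<q. \<forall>j<q. s1 ! i = s2 ! j \<longrightarrow>
        distinct [s1 ! ((i + q - 1) mod q), s1 ! ((i + 1) mod q), s2 ! i,
                  s2 ! ((j + q - 1) mod q), s2 ! ((j + 1) mod q), s1 ! j])"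

end

theory Submission
  imports Defs
begin

lemma H1: "(c * ((a::int) mod Q) + b) mod Q = (c*a + b) mod Q"
  by (metis mod_add_left_eq mod_mult_right_eq)
lemma gm: "int ((5*x+2) mod q) = (5 * int x + 2) mod int q"
  by (simp add: of_nat_mod ac_simps)
lemma a1g: assumes "q > 0" "int m = (5*J+2) mod int q"
  shows "int ((m + q - 1) mod q) mod int q = (5*J+1) mod int q"
proof -
  have "int ((m + q - 1) mod q) = (int m + (int q - 1)) mod int q"
    using assms(1) by (simp add: of_nat_mod of_nat_diff algebra_simps)
  also have "\<dots> = ((5*J+2) + (int q - 1)) mod int q" unfolding assms(2) by (rule mod_add_left_eq)
  also have "\<dots> = ((5*J+1) + int q) mod int q" by (simp add: algebra_simps)
  finally show ?thesis by simp
qed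
lemma a2g: assumes "int m = (5*J+2) mod int q"
  shows "int ((m + 1) mod q) mod int q = (5*J+3) mod int q"
proof -
  have "int ((m + 1) mod q) = (int m + 1) mod int q"
    by (simp add: of_nat_mod ac_simps)
  also have "\<dots> = ((5*J+2) + 1) mod int q" unfolding assms by (rule mod_add_left_eq)
  finally show ?thesis by (simp add: algebra_simps)
qed
lemma a3g: assumes "int m = (5*J+2) mod int q"
  shows "int ((5*m+2) mod q) mod int q = (25*J+12) mod int q"
proof -
  have "int ((5*m+2) mod q) = (5 * int m + 2) mod int q" by (rule gm)
  also have "\<dots> = (5 * (5*J+2) + 2) mod int q" unfolding assms by (rule H1)
  finally show ?thesis by (simp add: algebra_simps)
qed
lemma a4g: assumes "q > 0" "int m = (J + int q - 1) mod int q"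
  shows "int ((5*m+2) mod q) mod int q = (5*J-3) mod int q"
proof -
  have "int ((5*m+2) mod q) = (5 * int m + 2) mod int q" by (rule gm)
  also have "\<dots> = (5 * (J + int q - 1) + 2) mod int q" unfolding assms(2) by (rule H1)
  also have "\<dots> = (5*J-3 + int q * 5) mod int q" by (simp add: algebra_simps)
  finally show ?thesis by simp
qed
lemma a5g: assumes "int m = (J + 1) mod int q"
  shows "int ((5*m+2) mod q) mod int q = (5*J+7) mod int q"
proof -
  have "int ((5*m+2) mod q) = (5 * int m + 2) mod int q" by (rule gm)
  also have "\<dots> = (5 * (J + 1) + 2) mod int q" unfolding assms by (rule H1)
  finally show ?thesis by (simp add: algebra_simps)
qed
lemma m4: "q > 0 \<Longrightarrow> int ((j+q-1) mod q) = (int j + int q - 1) mod int q"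
  by (simp add: of_nat_mod of_nat_diff algebra_simps)
lemma m5: "int ((j+1) mod q) = (int j + 1) mod int q"
  by (simp add: of_nat_mod ac_simps)

lemma neqI:
  fixes a b :: nat and Q X Y :: int
  assumes "int a mod Q = X mod Q" "int b mod Q = Y mod Q" "\<not> Q dvd (X - Y)"
  shows "a \<noteq> b"
  using assms mod_eq_dvd_iff by metis

lemma key:
  fixes q j :: nat
  assumes q8: "8 dvd q" and jq: "j < q"
  defines "g \<equiv> \<lambda>x. (5*x+2) mod q"
  shows "distinct [(g j + q - 1) mod q, (g j + 1) mod q, g (g j),
                   g ((j+q-1) mod q), g ((j+1) mod q), j]"
proof -
  define Q where "Q = int q"
  define J where "J = int j"
  have Q8: "8 dvd Q" using q8 unfolding Q_def by (metis of_nat_dvd_iff of_nat_numeral)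
  have q0: "q > 0" using jq by simp
  have Qge: "Q \<ge> 8"
  proof -
    have "8 \<le> q" using q0 q8 dvd_imp_le by blast
    thus ?thesis unfolding Q_def by simp
  qed
  have odd: "\<not> Q dvd X" if "odd X" for X
  proof
    assume "Q dvd X"
    hence "8 dvd X" using Q8 dvd_trans by blast
    thus False using that by presburger
  qed
  have cst: "\<not> Q dvd X" if "X \<noteq> 0" "\<bar>X\<bar> < 8" for X
  proof
    assume "Q dvd X"
    hence "\<bar>Q\<bar> \<le> \<bar>X\<bar>" using that(1) dvd_imp_le_int by blast
    thus False using Qge that(2) by linarith
  qed
  have gj: "int (g j) = (5*J+2) mod Q" unfolding g_def Q_def J_def by (rule gm)
  have a1: "int ((g j + q - 1) mod q) mod Q = (5*J+1) mod Q"
    unfolding Q_def by (rule a1g[OF q0 gj[unfolded Q_def]])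
  have a2: "int ((g j + 1) mod q) mod Q = (5*J+3) mod Q"
    unfolding Q_def by (rule a2g[OF gj[unfolded Q_def]])
  have a3: "int (g (g j)) mod Q = (25*J+12) mod Q"
    unfolding Q_def g_def by (rule a3g[OF gj[unfolded Q_def g_def]])
  have a4: "int (g ((j+q-1) mod q)) mod Q = (5*J-3) mod Q"
    unfolding Q_def g_def J_def by (rule a4g[OF q0 m4[OF q0]])
  have a5: "int (g ((j+1) mod q)) mod Q = (5*J+7) mod Q"
    unfolding Q_def g_def J_def by (rule a5g[OF m5])
  have a6: "int j mod Q = J mod Q" by (simp add: J_def)
  have d36: "\<not> Q dvd ((25*J+12) - J)"
  proof
    assume "Q dvd ((25*J+12) - J)"
    hence "8 dvd ((25*J+12) - J)" using Q8 dvd_trans by blast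
    thus False by presburger
  qed
  have n12: "\<not> Q dvd ((5*J+1) - (5*J+3))" by (rule cst) simp_all
  have n13: "\<not> Q dvd ((5*J+1) - (25*J+12))" by (rule odd) presburger
  have n14: "\<not> Q dvd ((5*J+1) - (5*J-3))" by (rule cst) simp_all
  have n15: "\<not> Q dvd ((5*J+1) - (5*J+7))" by (rule cst) simp_all
  have n16: "\<not> Q dvd ((5*J+1) - (J))" by (rule odd) presburger
  have n23: "\<not> Q dvd ((5*J+3) - (25*J+12))" by (rule odd) presburger
  have n24: "\<not> Q dvd ((5*J+3) - (5*J-3))" by (rule cst) simp_all
  have n25: "\<not> Q dvd ((5*J+3) - (5*J+7))" by (rule cst) simp_all
  have n26: "\<not> Q dvd ((5*J+3) - (J))" by (rule odd) presburger
  have n34: "\<not> Q dvd ((25*J+12) - (5*J-3))" by (rule odd) presburger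
  have n35: "\<not> Q dvd ((25*J+12) - (5*J+7))" by (rule odd) presburger
  have n36: "\<not> Q dvd ((25*J+12) - (J))" by (rule d36)
  have n45: "\<not> Q dvd ((5*J-3) - (5*J+7))"
  proof
    assume "Q dvd ((5*J-3) - (5*J+7))"
    hence "8 dvd ((5*J-3) - (5*J+7))" using Q8 dvd_trans by blast
    thus False by presburger
  qed
  have n46: "\<not> Q dvd ((5*J-3) - (J))" by (rule odd) presburger
  have n56: "\<not> Q dvd ((5*J+7) - (J))" by (rule odd) presburger
  show ?thesis using neqI[OF a1 a2 n12] neqI[OF a1 a3 n13] neqI[OF a1 a4 n14] neqI[OF a1 a5 n15] neqI[OF a1 a6 n16] neqI[OF a2 a3 n23] neqI[OF a2 a4 n24] neqI[OF a2 a5 n25] neqI[OF a2 a6 n26] neqI[OF a3 a4 n34] neqI[OF a3 a5 n35] neqI[OF a3 a6 n36] neqI[OF a4 a5 n45] neqI[OF a4 a6 n46] neqI[OF a5 a6 n56] by auto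
qed


lemma g_inj:
  fixes q :: nat
  assumes qk: "q = 2 ^ k" and "i < q" "i' < q" and eq: "(5*i+2) mod q = (5*i'+2) mod q"
  shows "i = i'"
proof (rule ccontr)
  assume ne: "i \<noteq> i'"
  have "int ((5*i+2) mod q) = int ((5*i'+2) mod q)" using eq by simp
  hence "(5 * int i + 2) mod int q = (5 * int i' + 2) mod int q" by (simp only: gm)
  hence "int q dvd ((5 * int i + 2) - (5 * int i' + 2))" using mod_eq_dvd_iff by blast
  hence d: "int q dvd (5 * (int i - int i'))" by (simp add: algebra_simps)
  have c: "coprime (int q) 5" using qk by simp
  have "int q dvd (int i - int i')" using d coprime_dvd_mult_right_iff[OF c] by blast
  moreover have "int i - int i' \<noteq> 0" using ne by simp
  ultimately have "\<bar>int q\<bar> \<le> \<bar>int i - int i'\<bar>" using dvd_imp_le_int by blast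
  thus False using assms(2,3) by linarith
qed

theorem lemma2:
  fixes \<Omega> :: "'a set" and q :: nat
  assumes "finite \<Omega>" and "card \<Omega> = q" and "\<exists>k. q = 2 ^ k" and "q \<ge> 8"
  shows "\<exists>s1 s2. nice_pair \<Omega> s1 s2"
proof -
  obtain k where qk: "q = 2 ^ k" using assms(3) by blast
  have "k \<ge> 3"
  proof (rule ccontr)
    assume "\<not> k \<ge> 3"
    hence "k \<le> 2" by simp
    hence "(2::nat) ^ k \<le> 2 ^ 2" by (rule power_increasing) simp
    thus False using assms(4) qk by simp
  qed
  hence "k = 3 + (k - 3)" by simp
  hence "(2::nat) ^ k = 2 ^ 3 * 2 ^ (k - 3)" by (metis power_add)
  hence "q = 8 * 2 ^ (k - 3)" using qk by simp
  hence q8: "8 dvd q" by simp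
  obtain xs where xs: "distinct xs" "set xs = \<Omega>" using finite_distinct_list[OF assms(1)] by blast
  have len: "length xs = q" using distinct_card[OF xs(1)] xs(2) assms(2) by simp
  have q0: "q > 0" using assms(4) by simp
  define g where "g = (\<lambda>x::nat. (5*x+2) mod q)"
  have glt: "g x < q" for x unfolding g_def using q0 by simp
  define s2 where "s2 = map (\<lambda>i. xs ! g i) [0..<q]"
  have s2len: "length s2 = q" by (simp add: s2_def)
  have s2nth: "s2 ! i = xs ! g i" if "i < q" for i using that by (simp add: s2_def)
  have xinj: "xs ! a = xs ! b \<longleftrightarrow> a = b" if "a < q" "b < q" for a b
    using xs(1) that len nth_eq_iff_index_eq by metis
  have ds2: "distinct s2"
    unfolding s2_def distinct_map
  proof
    show "distinct [0..<q]" by simp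
    show "inj_on (\<lambda>i. xs ! g i) (set [0..<q])"
    proof (rule inj_onI)
      fix a b assume ab: "a \<in> set [0..<q]" "b \<in> set [0..<q]" "xs ! g a = xs ! g b"
      hence "g a = g b" using xinj[OF glt glt] by blast
      moreover have "a < q" "b < q" using ab by auto
      ultimately show "a = b" using g_inj[OF qk, of a b] unfolding g_def by blast
    qed
  qed
  have ss2: "set s2 = \<Omega>"
  proof -
    have "set s2 \<subseteq> \<Omega>" unfolding s2_def using xs(2) len glt by auto
    moreover have "card (set s2) = card \<Omega>" using distinct_card[OF ds2] s2len assms(2) by simp
    ultimately show ?thesis using assms(1) card_subset_eq by blast
  qed
  have "nice_pair \<Omega> xs s2"
    unfolding nice_pair_def is_perm_of_def Let_def assms(2)
  proof (intro conjI allI impI)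
    show "distinct xs" "set xs = \<Omega>" "distinct s2" "set s2 = \<Omega>" using xs ds2 ss2 by auto
    fix i j assume ij: "i < q" "j < q" "xs ! i = s2 ! j"
    have "xs ! i = xs ! g j" using ij s2nth by simp
    hence ig: "i = g j" using xinj[OF ij(1) glt] by blast
    have m1: "(i + q - 1) mod q < q" "(i+1) mod q < q" "(j + q - 1) mod q < q" "(j+1) mod q < q"
      using q0 by simp_all
    have L: "[xs ! ((i + q - 1) mod q), xs ! ((i + 1) mod q), s2 ! i,
              s2 ! ((j + q - 1) mod q), s2 ! ((j + 1) mod q), xs ! j]
           = map ((!) xs) [(g j + q - 1) mod q, (g j + 1) mod q, g (g j),
                   g ((j+q-1) mod q), g ((j+1) mod q), j]"
      using m1 ij unfolding ig by (simp add: s2nth)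
    have D: "distinct [(g j + q - 1) mod q, (g j + 1) mod q, g (g j),
                   g ((j+q-1) mod q), g ((j+1) mod q), j]"
      unfolding g_def by (rule key[OF q8 ij(2)])
    have "inj_on ((!) xs) (set [(g j + q - 1) mod q, (g j + 1) mod q, g (g j),
                   g ((j+q-1) mod q), g ((j+1) mod q), j])"
      by (rule inj_on_nth[OF xs(1)]) (simp add: len glt ij(2) q0)
    thus "distinct [xs ! ((i + q - 1) mod q), xs ! ((i + 1) mod q), s2 ! i,
              s2 ! ((j + q - 1) mod q), s2 ! ((j + 1) mod q), xs ! j]"
      unfolding L distinct_map using D by simp
  qed
  thus ?thesis by blast
qed

end
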